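(* Consider an instance of \textsc{Min-Lin-Eq$(q)$-Full} on the complete graph with $n$ vertices and $m=\binom n2$ edges. Fix an optimal assignment $\mathrm{OPT}$, violating $\mathrm{OPT_{val}}=\varepsilon m$ constraints with $0\le \varepsilon<\frac12$, and call the edges violated by $\mathrm{OPT}$ red. Call a vertex $v$ flippable if the number of red edges incident to $v$ is at least $(n-1)/2-\varepsilon(n-1)$. Then there are at most $\varepsilon\nu n$ flippable vertices, where $\nu=2/(1-2\varepsilon)$.
   Context: \textsc{Min-Lin-Eq$(q)$-Full}: given a complete simple graph $G=(V,E)$, a positive integer $q$, and for each ordered pair $(u,v)$ of distinct vertices an integer $c_{uv}\in\{0,\dots,q-1\}$ with $c_{vu}\equiv -c_{uv}\pmod q$, each edge $uv$ carries the constraint $x_u-x_v\equiv c_{uv}\pmod q$ on assignments $x:V\to\{0,\dots,q-1\}$; the goal is to find an assignment minimizing the number of violated constraints. *)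

theory Defs
  imports "HOL-Number_Theory.Cong" Complex_Main
begin

definition min_lin_eq_full_instance :: "'a set \<Rightarrow> int \<Rightarrow> ('a \<Rightarrow> 'a \<Rightarrow> int) \<Rightarrow> bool" where
  "min_lin_eq_full_instance V q c \<longleftrightarrow>
     finite V \<and> q > 0 \<and>
     (\<forall>u\<in>V. \<forall>v\<in>V. u \<noteq> v \<longrightarrow> c u v \<in> {0..<q} \<and> [c v u = - c u v] (mod q))"

definition is_assignment :: "'a set \<Rightarrow> int \<Rightarrow> ('a \<Rightarrow> int) \<Rightarrow> bool" where
  "is_assignment V q x \<longleftrightarrow> (\<forall>v\<in>V. x v \<in> {0..<q})"

definition violates :: "int \<Rightarrow> ('a \<Rightarrow> 'a \<Rightarrow> int) \<Rightarrow> ('a \<Rightarrow> int) \<Rightarrow> 'a \<Rightarrow> 'a \<Rightarrow> bool" where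
  "violates q c x u v \<longleftrightarrow> \<not> [x u - x v = c u v] (mod q)"

definition complete_edges :: "'a set \<Rightarrow> 'a set set" where
  "complete_edges V = {{u, v} | u v. u \<in> V \<and> v \<in> V \<and> u \<noteq> v}"

definition violated_edges :: "'a set \<Rightarrow> int \<Rightarrow> ('a \<Rightarrow> 'a \<Rightarrow> int) \<Rightarrow> ('a \<Rightarrow> int) \<Rightarrow> 'a set set" where
  "violated_edges V q c x =
     {{u, v} | u v. u \<in> V \<and> v \<in> V \<and> u \<noteq> v \<and> violates q c x u v}"

definition num_violated :: "'a set \<Rightarrow> int \<Rightarrow> ('a \<Rightarrow> 'a \<Rightarrow> int) \<Rightarrow> ('a \<Rightarrow> int) \<Rightarrow> nat" where
  "num_violated V q c x = card (violated_edges V q c x)"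

definition is_optimal :: "'a set \<Rightarrow> int \<Rightarrow> ('a \<Rightarrow> 'a \<Rightarrow> int) \<Rightarrow> ('a \<Rightarrow> int) \<Rightarrow> bool" where
  "is_optimal V q c x \<longleftrightarrow> is_assignment V q x \<and>
     (\<forall>y. is_assignment V q y \<longrightarrow> num_violated V q c x \<le> num_violated V q c y)"

definition red_degree :: "'a set \<Rightarrow> int \<Rightarrow> ('a \<Rightarrow> 'a \<Rightarrow> int) \<Rightarrow> ('a \<Rightarrow> int) \<Rightarrow> 'a \<Rightarrow> nat" where
  "red_degree V q c x v = card {e \<in> violated_edges V q c x. v \<in> e}"

definition flippable :: "'a set \<Rightarrow> int \<Rightarrow> ('a \<Rightarrow> 'a \<Rightarrow> int) \<Rightarrow> ('a \<Rightarrow> int) \<Rightarrow> real \<Rightarrow> 'a \<Rightarrow> bool" where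
  "flippable V q c x \<epsilon> v \<longleftrightarrow>
     real (red_degree V q c x v) \<ge> (real (card V) - 1) / 2 - \<epsilon> * (real (card V) - 1)"

end

theory Submission
  imports Defs
begin

lemma red_sum:
  assumes fin: "finite V"
  shows "(\<Sum>v\<in>V. red_degree V q c x v) = 2 * num_violated V q c x"
proof -
  let ?R = "violated_edges V q c x"
  have Rsub: "?R \<subseteq> Pow V" unfolding violated_edges_def by auto
  have finR: "finite ?R" using Rsub fin by (meson finite_Pow_iff finite_subset)
  have two: "card (V \<inter> e) = 2" if "e \<in> ?R" for e
    using that unfolding violated_edges_def by auto
  have "(\<Sum>v\<in>V. red_degree V q c x v) = (\<Sum>v\<in>V. \<Sum>e\<in>?R. if v \<in> e then 1 else (0::nat))"
    unfolding red_degree_def using finR by (simp add: sum.If_cases Int_def)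
  also have "\<dots> = (\<Sum>e\<in>?R. \<Sum>v\<in>V. if v \<in> e then 1 else (0::nat))"
    by (rule sum.swap)
  also have "\<dots> = (\<Sum>e\<in>?R. card (V \<inter> e))"
    using fin by (simp add: sum.If_cases)
  also have "\<dots> = (\<Sum>e\<in>?R. 2)" using two by simp
  also have "\<dots> = 2 * num_violated V q c x" unfolding num_violated_def by simp
  finally show ?thesis .
qed

theorem lemma3:
  fixes V :: "'a set" and q :: int and c :: "'a \<Rightarrow> 'a \<Rightarrow> int"
    and OPT :: "'a \<Rightarrow> int" and \<epsilon> :: real
  assumes inst: "min_lin_eq_full_instance V q c"
    and n2: "card V \<ge> 2"
    and opt: "is_optimal V q c OPT"
    and val: "real (num_violated V q c OPT) = \<epsilon> * real (card V choose 2)"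
    and eps0: "0 \<le> \<epsilon>" and eps1: "\<epsilon> < 1/2"
  shows "real (card {v \<in> V. flippable V q c OPT \<epsilon> v})
           \<le> \<epsilon> * (2 / (1 - 2 * \<epsilon>)) * real (card V)"
proof -
  let ?n = "real (card V)"
  let ?F = "{v \<in> V. flippable V q c OPT \<epsilon> v}"
  let ?d = "\<lambda>v. real (red_degree V q c OPT v)"
  have fin: "finite V" using inst unfolding min_lin_eq_full_instance_def by simp
  have ch: "real (card V choose 2) * 2 = ?n * (?n - 1)"
  proof -
    have ev: "even (card V * (card V - 1))" by (cases "even (card V)") auto
    have "(card V choose 2) * 2 = card V * (card V - 1)"
      using ev by (simp add: choose_two)
    then have "real ((card V choose 2) * 2) = real (card V * (card V - 1))" by simp
    then show ?thesis using n2 by (simp add: of_nat_diff)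
  qed
  have tot: "(\<Sum>v\<in>V. ?d v) = \<epsilon> * (?n * (?n - 1))"
  proof -
    have "(\<Sum>v\<in>V. ?d v) = real (\<Sum>v\<in>V. red_degree V q c OPT v)" by simp
    also have "\<dots> = 2 * real (num_violated V q c OPT)" using red_sum[OF fin] by simp
    also have "\<dots> = \<epsilon> * (real (card V choose 2) * 2)" using val by simp
    also have "\<dots> = \<epsilon> * (?n * (?n - 1))" by (simp only: ch)
    finally show ?thesis .
  qed
  let ?t = "(?n - 1) * (1 - 2 * \<epsilon>) / 2"
  have "real (card ?F) * ?t = (\<Sum>v\<in>?F. ?t)" by simp
  also have "\<dots> \<le> (\<Sum>v\<in>?F. ?d v)"
    by (rule sum_mono) (auto simp: flippable_def algebra_simps field_simps)
  also have "\<dots> \<le> (\<Sum>v\<in>V. ?d v)"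
    by (rule sum_mono2) (use fin in auto)
  finally have A: "real (card ?F) * ((?n - 1) * (1 - 2 * \<epsilon>) / 2) \<le> \<epsilon> * (?n * (?n - 1))"
    using tot by simp
  have n1: "?n - 1 > 0" using n2 by simp
  have e: "1 - 2 * \<epsilon> > 0" using eps1 by simp
  have "real (card ?F) * (1 - 2 * \<epsilon>) \<le> 2 * \<epsilon> * ?n"
  proof -
    have "(?n - 1) * (real (card ?F) * (1 - 2 * \<epsilon>)) \<le> (?n - 1) * (2 * \<epsilon> * ?n)"
    proof -
      have "(?n - 1) * (real (card ?F) * (1 - 2 * \<epsilon>)) = 2 * (real (card ?F) * ((?n - 1) * (1 - 2 * \<epsilon>) / 2))"
        by (simp add: algebra_simps)
      also have "\<dots> \<le> 2 * (\<epsilon> * (?n * (?n - 1)))" using A by linarith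
      also have "\<dots> = (?n - 1) * (2 * \<epsilon> * ?n)" by (simp add: algebra_simps)
      finally show ?thesis .
    qed
    then show ?thesis using n1 by (simp add: mult_le_cancel_left)
  qed
  then show ?thesis using e by (simp add: field_simps)
qed

end
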